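(* Let $\{\mathcal G,(\Gamma_0,\Gamma_1),(\widetilde\Gamma_0,\widetilde\Gamma_1)\}$ be a triple for the adjoint pair $\{S,\widetilde S\}$ satisfying (G), (D) and (M). Then $\operatorname{dom}S=\ker\widetilde\Gamma_0\cap\ker\widetilde\Gamma_1$ and $\operatorname{dom}\widetilde S=\ker\Gamma_0\cap\ker\Gamma_1$.
   Context: Let $\mathfrak H$ be a separable Hilbert space. An adjoint pair $\{S,\widetilde S\}$ consists of densely defined closed operators $S,\widetilde S$ in $\mathfrak H$ with $(Sf,g)=(f,\widetilde Sg)$ for all $f\in\operatorname{dom}S$, $g\in\operatorname{dom}\widetilde S$. Fix operators $T\subset S^*$ and $\widetilde T\subset\widetilde S^*$ which are cores, i.e. $\overline T=S^*$ and $\overline{\widetilde T}=\widetilde S^*$ (equivalently $T^*=S$, $\widetilde T^*=\widetilde S$). A triple $\{\mathcal G,(\Gamma_0,\Gamma_1),(\widetilde\Gamma_0,\widetilde\Gamma_1)\}$ for $\{S,\widetilde S\}$ consists of a Hilbert space $\mathcal G$ and linear maps $\Gamma_0,\Gamma_1:\operatorname{dom}T\to\mathcal G$, $\widetilde\Gamma_0,\widetilde\Gamma_1:\operatorname{dom}\widetilde T\to\mathcal G$. Put $A_0:=T\upharpoonright\ker\Gamma_0$ and $\widetilde A_0:=\widetilde T\upharpoonright\ker\widetilde\Gamma_0$. Conditions: (G) $(Tf,g)_{\mathfrak H}-(f,\widetilde Tg)_{\mathfrak H}=(\Gamma_1f,\widetilde\Gamma_0g)_{\mathcal G}-(\Gamma_0f,\widetilde\Gamma_1g)_{\mathcal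 G}$ for all $f\in\operatorname{dom}T$, $g\in\operatorname{dom}\widetilde T$; (D) $\operatorname{ran}\Gamma_0$ and $\operatorname{ran}\widetilde\Gamma_0$ are dense in $\mathcal G$; (M) $A_0^*=\widetilde A_0$ and $\widetilde A_0^*=A_0$. *)

theory Defs
  imports "HOL-Analysis.Analysis"
begin

class complex_hilbert = ab_group_add + complete_space +
  fixes scaleC :: "complex \<Rightarrow> 'a \<Rightarrow> 'a" (infixr \<open>*\<^sub>C\<close> 75)
    and cinner :: "'a \<Rightarrow> 'a \<Rightarrow> complex"
  assumes scaleC_add_right: "a *\<^sub>C (x + y) = a *\<^sub>C x + a *\<^sub>C y"
    and scaleC_add_left: "(a + b) *\<^sub>C x = a *\<^sub>C x + b *\<^sub>C x"
    and scaleC_scaleC: "a *\<^sub>C (b *\<^sub>C x) = (a * b) *\<^sub>C x"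
    and scaleC_one: "1 *\<^sub>C x = x"
    and cinner_conj: "cinner x y = cnj (cinner y x)"
    and cinner_add_left: "cinner (x + y) z = cinner x z + cinner y z"
    and cinner_scaleC_left: "cinner (a *\<^sub>C x) y = a * cinner x y"
    and cinner_pos: "x \<noteq> 0 \<Longrightarrow> Re (cinner x x) > 0"
    and dist_cinner: "dist x y = sqrt (Re (cinner (x - y) (x - y)))"

text \<open>A (linear, possibly unbounded) operator in H is identified with its graph, a subset
  of H \<times> H that is a linear subspace and single-valued.  Its domain is
  the library's Domain of the relation.\<close>

definition is_operator :: "('h::complex_hilbert \<times> 'h) set \<Rightarrow> bool" where
  "is_operator A \<longleftrightarrow>
     (0, 0) \<in> A \<and>
     (\<forall>f g h k. (f, g) \<in> A \<longrightarrow> (h, k) \<in> A \<longrightarrow> (f + h, g + k) \<in> A) \<and>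
     (\<forall>a f g. (f, g) \<in> A \<longrightarrow> (a *\<^sub>C f, a *\<^sub>C g) \<in> A) \<and>
     (\<forall>f g k. (f, g) \<in> A \<longrightarrow> (f, k) \<in> A \<longrightarrow> g = k)"

definition densely_defined :: "('h::complex_hilbert \<times> 'h) set \<Rightarrow> bool" where
  "densely_defined A \<longleftrightarrow> closure (Domain A) = UNIV"

definition closed_operator :: "('h::complex_hilbert \<times> 'h) set \<Rightarrow> bool" where
  "closed_operator A \<longleftrightarrow> is_operator A \<and> closed A"

definition op_adjoint :: "('h::complex_hilbert \<times> 'h) set \<Rightarrow> ('h \<times> 'h) set" where
  "op_adjoint A = {(g, h). \<forall>(f, k) \<in> A. cinner k g = cinner f h}"

definition adjoint_pair :: "('h::complex_hilbert \<times> 'h) set \<Rightarrow> ('h \<times> 'h) set \<Rightarrow> bool" where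
  "adjoint_pair S S' \<longleftrightarrow>
     densely_defined S \<and> closed_operator S \<and> densely_defined S' \<and> closed_operator S' \<and>
     (\<forall>f Sf g S'g. (f, Sf) \<in> S \<longrightarrow> (g, S'g) \<in> S' \<longrightarrow> cinner Sf g = cinner f S'g)"

definition linear_on_dom ::
  "('h::complex_hilbert \<times> 'h) set \<Rightarrow> ('h \<Rightarrow> 'g::complex_hilbert) \<Rightarrow> bool" where
  "linear_on_dom T \<Gamma> \<longleftrightarrow>
     (\<forall>f \<in> Domain T. \<forall>g \<in> Domain T. \<Gamma> (f + g) = \<Gamma> f + \<Gamma> g) \<and>
     (\<forall>a. \<forall>f \<in> Domain T. \<Gamma> (a *\<^sub>C f) = a *\<^sub>C \<Gamma> f)"

definition restrict_ker ::
  "('h::complex_hilbert \<times> 'h) set \<Rightarrow> ('h \<Rightarrow> 'g::complex_hilbert) \<Rightarrow> ('h \<times> 'h) set" where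
  "restrict_ker T \<Gamma> = {(f, g) \<in> T. \<Gamma> f = 0}"

end

theory Submission
  imports Defs
begin


lemma cinner_zero_left[simp]: "cinner 0 y = 0"
  using cinner_add_left[of 0 0 y] by simp
lemma cinner_zero_right[simp]: "cinner x 0 = 0"
  using cinner_conj[of x 0] by simp
lemma cinner_add_right: "cinner z (x + y) = cinner z x + cinner z y"
  by (metis cinner_conj cinner_add_left complex_cnj_add)
lemma cinner_minus_left: "cinner (- x) y = - cinner x y"
proof -
  have h: "cinner x y + cinner (- x) y = 0" using cinner_add_left[of x "-x" y] by simp
  have "cinner (- x) y = (cinner x y + cinner (- x) y) - cinner x y" by simp
  then show ?thesis using h by simp
qed
lemma cinner_minus_right: "cinner x (- y) = - cinner x y"
  by (metis cinner_conj cinner_minus_left complex_cnj_minus)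
lemma cinner_diff_left: "cinner (x - y) z = cinner x z - cinner y z"
  using cinner_add_left[of x "- y" z] by (simp add: cinner_minus_left)
lemma cinner_diff_right: "cinner z (x - y) = cinner z x - cinner z y"
  using cinner_add_right[of z x "- y"] by (simp add: cinner_minus_right)
lemma cinner_scaleC_right: "cinner x (a *\<^sub>C y) = cnj a * cinner x y"
  by (metis cinner_conj cinner_scaleC_left complex_cnj_mult)
lemma scaleC_zero_left[simp]: "0 *\<^sub>C x = 0"
  using scaleC_add_left[of 0 0 x] by simp
lemma scaleC_zero_right[simp]: "a *\<^sub>C 0 = 0"
  using scaleC_add_right[of a 0 0] by simp
lemma scaleC_minus_right: "a *\<^sub>C (- x) = - (a *\<^sub>C x)"
proof -
  have h: "a *\<^sub>C x + a *\<^sub>C (- x) = 0" using scaleC_add_right[of a x "-x"] by simp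
  have "a *\<^sub>C (- x) = (a *\<^sub>C x + a *\<^sub>C (- x)) - a *\<^sub>C x" by simp
  then show ?thesis using h by simp
qed
lemma scaleC_diff_right: "a *\<^sub>C (x - y) = a *\<^sub>C x - a *\<^sub>C y"
  using scaleC_add_right[of a x "- y"] by (simp add: scaleC_minus_right)
lemma cinner_self_Im: "Im (cinner x x) = 0"
proof -
  have eq: "cinner x x = cnj (cinner x x)" by (rule cinner_conj)
  have "Im (cinner x x) = - Im (cinner x x)" using arg_cong[OF eq, of Im] by simp
  then show ?thesis by linarith
qed
lemma cinner_self_real: "cinner x x = complex_of_real (Re (cinner x x))"
  using cinner_self_Im[of x] by (simp add: complex_eq_iff)
lemma cinner_self_nonneg: "0 \<le> Re (cinner x x)"
  using cinner_pos[of x] by (cases "x = 0") auto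
lemma cinner_self_eq0: "Re (cinner x x) = 0 \<longleftrightarrow> x = 0"
proof
  assume "Re (cinner x x) = 0"
  then show "x = 0" using cinner_pos[of x] by (cases "x = 0") auto
qed simp
lemma dist_eq: "dist x y = sqrt (Re (cinner (x - y) (x - y)))"
  by (rule dist_cinner)

lemma expand: "Re (cinner (z - t *\<^sub>C m) (z - t *\<^sub>C m)) =
   Re (cinner z z) - 2 * Re (cnj t * cinner z m) + (cmod t)^2 * Re (cinner m m)"
proof -
  have "cinner (z - t *\<^sub>C m) (z - t *\<^sub>C m) = cinner z z - cnj t * cinner z m - t * cinner m z + t * cnj t * cinner m m"
    by (simp add: cinner_diff_left cinner_diff_right cinner_scaleC_left cinner_scaleC_right algebra_simps)
  moreover have "cinner m z = cnj (cinner z m)" by (rule cinner_conj)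
  moreover have "Re (t * cnj (cinner z m)) = Re (cnj t * cinner z m)" by simp
  moreover have "t * cnj t = complex_of_real ((cmod t)^2)" by (rule complex_norm_square[symmetric])
  moreover have "Re (complex_of_real r * cinner m m) = r * Re (cinner m m)" for r by simp
  ultimately show ?thesis by simp
qed

lemma cauchy_schwarz: "(cmod (cinner x y))^2 \<le> Re (cinner x x) * Re (cinner y y)"
proof (cases "y = 0")
  case True then show ?thesis by simp
next
  case False
  define c where "c = cinner x y"
  define r where "r = Re (cinner y y)"
  have r: "r > 0" using cinner_pos[OF False] r_def by simp
  define t where "t = c / complex_of_real r"
  have "0 \<le> Re (cinner (x - t *\<^sub>C y) (x - t *\<^sub>C y))" by (rule cinner_self_nonneg)
  also have "\<dots> = Re (cinner x x) - 2 * Re (cnj t * c) + (cmod t)^2 * r"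
    by (simp add: expand c_def r_def)
  also have "cnj t * c = complex_of_real ((cmod c)^2 / r)"
  proof -
    have "cnj t * c = (c * cnj c) / complex_of_real r" by (simp add: t_def)
    also have "c * cnj c = complex_of_real ((cmod c)^2)" by (rule complex_norm_square[symmetric])
    finally show ?thesis by simp
  qed
  also have "(cmod t)^2 = (cmod c)^2 / r^2"
    using r by (simp add: t_def norm_divide power_divide)
  finally have "0 \<le> Re (cinner x x) - (cmod c)^2 / r"
    using r by (simp add: power2_eq_square field_simps)
  then have "(cmod c)^2 / r \<le> Re (cinner x x)" by simp
  then show ?thesis using r by (simp add: c_def r_def[symmetric] field_simps)
qed

lemma cinner_bound: "cmod (cinner x y) \<le> dist x 0 * dist y 0"
proof -
  have "(cmod (cinner x y))^2 \<le> (dist x 0 * dist y 0)^2"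
    using cauchy_schwarz[of x y] by (simp add: dist_eq power_mult_distrib cinner_self_nonneg)
  then show ?thesis by (rule power2_le_imp_le) simp
qed

lemma continuous_on_cinner_left: "continuous_on S (\<lambda>x. cinner x g)"
  unfolding continuous_on_iff
proof (intro ballI allI impI)
  fix x e assume "x \<in> S" "(0::real) < e"
  define d where "d = e / (dist g 0 + 1)"
  have d: "d > 0" using \<open>e > 0\<close> by (simp add: d_def add_nonneg_pos)
  show "\<exists>d>0. \<forall>x'\<in>S. dist x' x < d \<longrightarrow> dist (cinner x' g) (cinner x g) < e"
  proof (intro exI[of _ d] conjI ballI impI d)
    fix x' assume "dist x' x < d"
    have "cinner (x' - x) g = cinner x' g - cinner x g" by (rule cinner_diff_left)
    then have "dist (cinner x' g) (cinner x g) = cmod (cinner (x' - x) g)"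
      by (simp add: dist_norm)
    also have "\<dots> \<le> dist (x' - x) 0 * dist g 0" by (rule cinner_bound)
    also have "dist (x' - x) 0 = dist x' x" by (simp add: dist_eq)
    also have "dist x' x * dist g 0 \<le> d * dist g 0"
      using \<open>dist x' x < d\<close> by (simp add: mult_right_mono)
    also have "d * dist g 0 < e"
    proof -
      have pos: "dist g 0 + 1 > 0" using zero_le_dist[of g 0] by linarith
      have "e * dist g 0 < e * (dist g 0 + 1)" using \<open>e > 0\<close> by simp
      then show ?thesis using pos by (simp add: d_def pos_divide_less_eq)
    qed
    finally show "dist (cinner x' g) (cinner x g) < e" .
  qed
qed

lemma continuous_on_cinner_left'[continuous_intros]:
  "continuous_on S f \<Longrightarrow> continuous_on S (\<lambda>x. cinner (f x) g)"
  using continuous_on_compose2[OF continuous_on_cinner_left[of UNIV g]] by auto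

lemma dense_orth:
  assumes "closure X = UNIV" "\<forall>x\<in>X. cinner x y = 0"
  shows "y = 0"
proof (rule ccontr)
  assume "y \<noteq> 0"
  then have r: "Re (cinner y y) > 0" using cinner_pos by blast
  have "y \<in> closure X" using assms by simp
  then have ap: "\<forall>e>0. \<exists>x\<in>X. dist x y < e" by (simp add: closure_approachable)
  have "sqrt (Re (cinner y y)) > 0" using r by simp
  then obtain x where x: "x \<in> X" "dist x y < sqrt (Re (cinner y y))"
    using ap by blast
  have "cinner (x - y) (x - y) = cinner x x - cinner x y - cinner y x + cinner y y"
    by (simp add: cinner_diff_left cinner_diff_right)
  moreover have "cinner y x = 0" using assms x cinner_conj[of y x] by simp
  ultimately have "Re (cinner (x - y) (x - y)) = Re (cinner x x) + Re (cinner y y)"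
    using assms x by simp
  then have "Re (cinner y y) \<le> Re (cinner (x-y) (x-y))" using cinner_self_nonneg[of x] by simp
  then have "sqrt (Re (cinner y y)) \<le> dist x y" by (simp add: dist_eq)
  then show False using x by simp
qed

lemma Q_scale: "Re (cinner (c *\<^sub>C z) (c *\<^sub>C z)) = (cmod c)^2 * Re (cinner z z)"
proof -
  have "cinner (c *\<^sub>C z) (c *\<^sub>C z) = (c * cnj c) * cinner z z"
    by (simp add: cinner_scaleC_left cinner_scaleC_right)
  also have "c * cnj c = complex_of_real ((cmod c)^2)" by (rule complex_norm_square[symmetric])
  finally show ?thesis by simp
qed

lemma parallelogram: "Re (cinner (a + b) (a + b)) + Re (cinner (b - a) (b - a)) =
   2 * Re (cinner a a) + 2 * Re (cinner b b)"
  by (simp add: cinner_add_left cinner_add_right cinner_diff_left cinner_diff_right)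

lemma half_sum: "(1/2::complex) *\<^sub>C ((w - x) + (w - y)) = w - (1/2::complex) *\<^sub>C (x + y)"
proof -
  have "(1/2::complex) *\<^sub>C ((w - x) + (w - y)) = (1/2::complex) *\<^sub>C ((w + w) - (x + y))"
    by (simp add: algebra_simps)
  also have "\<dots> = (1/2::complex) *\<^sub>C w + (1/2::complex) *\<^sub>C w - (1/2::complex) *\<^sub>C (x + y)"
    by (simp add: scaleC_diff_right scaleC_add_right)
  also have "(1/2::complex) *\<^sub>C w + (1/2::complex) *\<^sub>C w = w"
    by (simp add: scaleC_add_left[symmetric] scaleC_one)
  finally show ?thesis .
qed

lemma projection_exists:
  fixes M :: "'a::complex_hilbert set" and w :: 'a
  assumes M: "closed M" "0 \<in> M" "\<And>x y. x \<in> M \<Longrightarrow> y \<in> M \<Longrightarrow> x + y \<in> M"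
     "\<And>a x. x \<in> M \<Longrightarrow> a *\<^sub>C x \<in> M"
  shows "\<exists>p\<in>M. \<forall>m\<in>M. cinner (w - p) m = 0"
proof -
  define Q :: "'a \<Rightarrow> real" where "Q x = Re (cinner x x)" for x
  have Q0: "Q x \<ge> 0" for x by (simp add: Q_def cinner_self_nonneg)
  have dQ: "dist x y = sqrt (Q (x - y))" for x y by (simp add: Q_def dist_eq)
  define d where "d = Inf ((\<lambda>m. Q (w - m)) ` M)"
  have bdd: "bdd_below ((\<lambda>m. Q (w - m)) ` M)"
    unfolding bdd_below_def using Q0 by blast
  have dle: "d \<le> Q (w - m)" if "m \<in> M" for m
    unfolding d_def using bdd that by (auto intro: cInf_lower)
  have d0: "d \<ge> 0" unfolding d_def using M(2) Q0 by (auto intro!: cInf_greatest)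
  have "\<exists>m\<in>M. Q (w - m) < d + 1 / real (Suc n)" for n
  proof -
    have "Inf ((\<lambda>m. Q (w - m)) ` M) < d + 1 / real (Suc n)" by (simp add: d_def)
    then show ?thesis using bdd M(2) by (subst (asm) cInf_less_iff) auto
  qed
  then obtain ms where ms: "\<And>n. ms n \<in> M" "\<And>n. Q (w - ms n) < d + 1 / real (Suc n)"
    by metis
  have est: "Q (ms i - ms j) \<le> 2 / real (Suc i) + 2 / real (Suc j)" for i j
  proof -
    define a where "a = w - ms j"
    define b where "b = w - ms i"
    have h: "(1/2::complex) *\<^sub>C (ms i + ms j) \<in> M" using M ms by auto
    have "Q (a + b) = 4 * Q (w - (1/2::complex) *\<^sub>C (ms i + ms j))"
    proof -
      have "a + b = (2::complex) *\<^sub>C ((1/2::complex) *\<^sub>C ((w - ms i) + (w - ms j)))"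
        by (simp add: scaleC_scaleC scaleC_one a_def b_def add.commute)
      then show ?thesis by (simp add: Q_def Q_scale half_sum)
    qed
    moreover have "b - a = ms j - ms i" by (simp add: a_def b_def)
    moreover have "Q (ms i - ms j) = Q (ms j - ms i)"
      unfolding Q_def by (metis minus_diff_eq cinner_minus_left cinner_minus_right minus_minus)
    ultimately have "Q (ms i - ms j) = 2 * Q a + 2 * Q b - 4 * Q (w - (1/2::complex) *\<^sub>C (ms i + ms j))"
      using parallelogram[of a b] unfolding Q_def by simp
    moreover have "d \<le> Q (w - (1/2::complex) *\<^sub>C (ms i + ms j))" using dle h by simp
    moreover have "Q a < d + 1 / real (Suc j)" "Q b < d + 1 / real (Suc i)"
      using ms(2) by (auto simp: a_def b_def)
    ultimately show ?thesis by simp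
  qed
  have "Cauchy ms"
    unfolding Cauchy_def
  proof (intro allI impI)
    fix e :: real assume e: "e > 0"
    obtain N :: nat where N: "4 / e^2 < real N" using reals_Archimedean2 by blast
    show "\<exists>M. \<forall>m\<ge>M. \<forall>n\<ge>M. dist (ms m) (ms n) < e"
    proof (intro exI[of _ N] allI impI)
      fix m n assume mn: "N \<le> m" "N \<le> n"
      have e2: "e^2 > 0" using e by simp
      have "4 / e^2 < real (Suc m)" "4 / e^2 < real (Suc n)" using N mn by auto
      then have "2 / real (Suc m) < e^2 / 2" "2 / real (Suc n) < e^2 / 2"
        using e2 by (auto simp: field_simps)
      then have "Q (ms m - ms n) < e^2" using est[of m n] by simp
      then have "sqrt (Q (ms m - ms n)) < sqrt (e^2)" by (rule real_sqrt_less_mono)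
      then show "dist (ms m) (ms n) < e" using e by (simp add: dQ)
    qed
  qed
  then obtain p where p: "ms \<longlonglongrightarrow> p" using Cauchy_convergent convergent_def by blast
  have pM: "p \<in> M" using closed_sequentially[OF M(1) ms(1) p] .
  have "sqrt (Q (w - p)) \<le> 0 + sqrt (d + 0)"
  proof (rule LIMSEQ_le_const)
    show "(\<lambda>n. dist (ms n) p + sqrt (d + 1 / real (Suc n))) \<longlonglongrightarrow> 0 + sqrt (d + 0)"
      using p LIMSEQ_inverse_real_of_nat
      by (intro tendsto_intros) (auto simp: tendsto_dist_iff[symmetric] divide_inverse)
    show "\<exists>N. \<forall>n\<ge>N. sqrt (Q (w - p)) \<le> dist (ms n) p + sqrt (d + 1 / real (Suc n))"
    proof (intro exI allI impI)
      fix n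
      have "sqrt (Q (w - p)) = dist (w - p) 0" by (simp add: dQ)
      also have "\<dots> \<le> dist (w - p) (w - ms n) + dist (w - ms n) 0" by (rule dist_triangle)
      also have "dist (w - p) (w - ms n) = dist (ms n) p" by (simp add: dQ)
      also have "dist (w - ms n) 0 \<le> sqrt (d + 1 / real (Suc n))"
        using ms(2)[of n] by (simp add: dQ)
      finally show "sqrt (Q (w - p)) \<le> dist (ms n) p + sqrt (d + 1 / real (Suc n))" by simp
    qed
  qed
  then have Qp: "Q (w - p) \<le> d" using d0 Q0 by simp
  show ?thesis
  proof (intro bexI[OF _ pM] ballI)
    fix m assume m: "m \<in> M"
    define z where "z = w - p"
    define c where "c = cinner z m"
    define s where "s = 1 / (Q m + 1)"
    have s: "s > 0" using Q0[of m] by (simp add: s_def add_nonneg_pos)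
    define t where "t = complex_of_real s * c"
    have "p + t *\<^sub>C m \<in> M" using M pM m by auto
    then have "d \<le> Q (w - (p + t *\<^sub>C m))" by (rule dle)
    also have "w - (p + t *\<^sub>C m) = z - t *\<^sub>C m" by (simp add: z_def algebra_simps)
    finally have "Q z \<le> Q (z - t *\<^sub>C m)" using Qp z_def by simp
    also have "\<dots> = Q z - 2 * Re (cnj t * c) + (cmod t)^2 * Q m"
      by (simp add: Q_def expand c_def)
    also have "cnj t * c = complex_of_real (s * (cmod c)^2)"
    proof -
      have cc: "c * cnj c = complex_of_real ((cmod c)^2)" by (rule complex_norm_square[symmetric])
      have "cnj t * c = complex_of_real s * (c * cnj c)" by (simp add: t_def mult_ac)
      also have "\<dots> = complex_of_real s * complex_of_real ((cmod c)^2)" by (simp only: cc)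
      also have "\<dots> = complex_of_real (s * (cmod c)^2)" by (simp only: of_real_mult)
      finally show ?thesis .
    qed
    also have "(cmod t)^2 = s^2 * (cmod c)^2" using s
      by (simp add: t_def norm_mult power_mult_distrib)
    finally have "2 * s * (cmod c)^2 \<le> s^2 * (cmod c)^2 * Q m" by simp
    then have "2 * (cmod c)^2 \<le> s * (cmod c)^2 * Q m" using s
      by (simp add: power2_eq_square mult.assoc mult_le_cancel_left_pos)
    moreover have "s * Q m \<le> 1" using Q0[of m] by (simp add: s_def field_simps)
    then have "s * (cmod c)^2 * Q m \<le> (cmod c)^2"
      using mult_right_mono[of "s * Q m" 1 "(cmod c)^2"] by (simp add: mult_ac)
    ultimately have "(cmod c)^2 \<le> 0" by linarith
    then show "cinner (w - p) m = 0" by (simp add: c_def z_def)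
  qed
qed


instantiation prod :: (complex_hilbert, complex_hilbert) complex_hilbert
begin
definition scaleC_prod :: "complex \<Rightarrow> 'a \<times> 'b \<Rightarrow> 'a \<times> 'b" where
  "scaleC_prod a x = (a *\<^sub>C fst x, a *\<^sub>C snd x)"
definition cinner_prod :: "'a \<times> 'b \<Rightarrow> 'a \<times> 'b \<Rightarrow> complex" where
  "cinner_prod x y = cinner (fst x) (fst y) + cinner (snd x) (snd y)"
instance
proof
  fix a b :: complex and x y z :: "'a \<times> 'b"
  show "a *\<^sub>C (x + y) = a *\<^sub>C x + a *\<^sub>C y"
    by (simp add: scaleC_prod_def scaleC_add_right)
  show "(a + b) *\<^sub>C x = a *\<^sub>C x + b *\<^sub>C x"
    by (simp add: scaleC_prod_def scaleC_add_left)
  show "a *\<^sub>C (b *\<^sub>C x) = (a * b) *\<^sub>C x"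
    by (simp add: scaleC_prod_def scaleC_scaleC)
  show "1 *\<^sub>C x = x"
    by (simp add: scaleC_prod_def scaleC_one)
  show "cinner x y = cnj (cinner y x)"
    by (simp add: cinner_prod_def cinner_conj[of "fst x"] cinner_conj[of "snd x"])
  show "cinner (x + y) z = cinner x z + cinner y z"
    by (simp add: cinner_prod_def cinner_add_left)
  show "cinner (a *\<^sub>C x) y = a * cinner x y"
    by (simp add: cinner_prod_def scaleC_prod_def cinner_scaleC_left algebra_simps)
  show "x \<noteq> 0 \<Longrightarrow> Re (cinner x x) > 0"
  proof -
    assume "x \<noteq> 0"
    then have "fst x \<noteq> 0 \<or> snd x \<noteq> 0" by (simp add: prod_eq_iff)
    then show "Re (cinner x x) > 0"
      using cinner_pos[of "fst x"] cinner_pos[of "snd x"]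
        cinner_self_nonneg[of "fst x"] cinner_self_nonneg[of "snd x"]
      by (auto simp: cinner_prod_def add_pos_nonneg add_nonneg_pos)
  qed
  show "dist x y = sqrt (Re (cinner (x - y) (x - y)))"
    using cinner_self_nonneg[of "fst x - fst y"] cinner_self_nonneg[of "snd x - snd y"]
    by (simp add: dist_prod_def cinner_prod_def dist_eq)
qed
end

lemma adj_adj_sub: "A \<subseteq> op_adjoint (op_adjoint A)"
proof
  fix q assume q: "q \<in> A"
  obtain g h where gh: "q = (g, h)" by (cases q)
  have "cinner k g = cinner f h" if fk: "(f, k) \<in> op_adjoint A" for f k
  proof -
    have "cinner h f = cinner g k" using fk q gh unfolding op_adjoint_def by auto
    then have "cnj (cinner h f) = cnj (cinner g k)" by simp
    then show ?thesis by (simp add: cinner_conj[of f h] cinner_conj[of k g])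
  qed
  then show "q \<in> op_adjoint (op_adjoint A)" using gh unfolding op_adjoint_def by auto
qed

lemma adj_anti: "A \<subseteq> B \<Longrightarrow> op_adjoint B \<subseteq> op_adjoint A"
  unfolding op_adjoint_def by auto

lemma adj_closure: "op_adjoint (closure A) = op_adjoint A"
proof
  show "op_adjoint (closure A) \<subseteq> op_adjoint A" by (rule adj_anti) (rule closure_subset)
  show "op_adjoint A \<subseteq> op_adjoint (closure A)"
  proof
    fix q assume q: "q \<in> op_adjoint A"
    obtain g h where gh: "q = (g, h)" by (cases q)
    define C where "C = {x. cinner (snd x) g - cinner (fst x) h = 0}"
    have "closed C" unfolding C_def
      by (intro closed_Collect_eq continuous_intros)
    moreover have "A \<subseteq> C" using q gh unfolding C_def op_adjoint_def by auto
    ultimately have "closure A \<subseteq> C" by (rule closure_minimal[rotated])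
    then show "q \<in> op_adjoint (closure A)" using gh unfolding C_def op_adjoint_def by auto
  qed
qed

lemma adj_adj_closed:
  assumes "is_operator S" "closed S"
  shows "op_adjoint (op_adjoint S) \<subseteq> S"
proof
  fix w assume w: "w \<in> op_adjoint (op_adjoint S)"
  obtain g h where gh: "w = (g, h)" by (cases w)
  have "\<exists>p\<in>S. \<forall>m\<in>S. cinner (w - p) m = 0"
  proof (rule projection_exists)
    show "closed S" by fact
    show "0 \<in> S" using assms(1) by (simp add: is_operator_def zero_prod_def)
    show "x + y \<in> S" if "x \<in> S" "y \<in> S" for x y
      using assms(1) that unfolding is_operator_def
      by (metis plus_prod_def prod.collapse)
    show "a *\<^sub>C x \<in> S" if "x \<in> S" for a x
      using assms(1) that unfolding is_operator_def scaleC_prod_def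
      by (metis prod.collapse)
  qed
  then obtain a b where ab: "(a, b) \<in> S" "\<forall>m\<in>S. cinner (w - (a, b)) m = 0" by auto
  define u where "u = g - a"
  define v where "v = h - b"
  have orth: "cinner u x + cinner v y = 0" if "(x, y) \<in> S" for x y
    using ab(2) that gh by (auto simp: cinner_prod_def u_def v_def)
  have adj: "(v, - u) \<in> op_adjoint S"
    unfolding op_adjoint_def
  proof (clarsimp)
    fix x y assume "(x, y) \<in> S"
    from orth[OF this] have "cinner v y = - cinner u x" by (simp add: eq_neg_iff_add_eq_0 add.commute)
    then show "cinner y v = cinner x (- u)"
      by (metis cinner_conj cinner_minus_right complex_cnj_minus)
  qed
  have 1: "cinner (- u) g = cinner v h" using w gh adj unfolding op_adjoint_def by auto
  have 2: "cinner (- u) a = cinner v b" using adj_adj_sub[of S] ab(1) adj unfolding op_adjoint_def by auto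
  have "cinner (- u) u = cinner v v"
    using 1 2 by (simp add: u_def v_def cinner_diff_right)
  then have "- cinner u u = cinner v v" by (simp add: cinner_minus_left)
  then have "Re (- cinner u u) = Re (cinner v v)" by simp
  then have "- Re (cinner u u) = Re (cinner v v)" by simp
  then have "Re (cinner u u) = 0" "Re (cinner v v) = 0"
    using cinner_self_nonneg[of u] cinner_self_nonneg[of v] by linarith+
  then have "u = 0" "v = 0" by (simp_all add: cinner_self_eq0)
  then show "w \<in> S" using ab(1) gh by (simp add: u_def v_def)
qed


lemma half:
  fixes S T T' :: "('h::complex_hilbert \<times> 'h) set"
    and \<Gamma>0 \<Gamma>1 \<Gamma>0' \<Gamma>1' :: "'h \<Rightarrow> 'g::complex_hilbert"
  assumes S_op: "is_operator S" and S_cl: "closed S"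
    and T_sub: "T \<subseteq> op_adjoint S" and T_core: "closure T = op_adjoint S"
    and G: "\<And>f Tf g T'g. (f, Tf) \<in> T \<Longrightarrow> (g, T'g) \<in> T' \<Longrightarrow>
              cinner Tf g - cinner f T'g = cinner (\<Gamma>1 f) (\<Gamma>0' g) - cinner (\<Gamma>0 f) (\<Gamma>1' g)"
    and D: "closure (\<Gamma>0 ` Domain T) = UNIV"
    and M: "op_adjoint (restrict_ker T \<Gamma>0) = restrict_ker T' \<Gamma>0'"
  shows "Domain S = {g \<in> Domain T'. \<Gamma>0' g = 0 \<and> \<Gamma>1' g = 0}"
proof
  show "Domain S \<subseteq> {g \<in> Domain T'. \<Gamma>0' g = 0 \<and> \<Gamma>1' g = 0}"
  proof
    fix g assume "g \<in> Domain S"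
    then obtain k where gk: "(g, k) \<in> S" by auto
    have "restrict_ker T \<Gamma>0 \<subseteq> op_adjoint S" using T_sub unfolding restrict_ker_def by auto
    then have "op_adjoint (op_adjoint S) \<subseteq> restrict_ker T' \<Gamma>0'"
      using adj_anti M by metis
    then have "(g, k) \<in> restrict_ker T' \<Gamma>0'" using adj_adj_sub[of S] gk by auto
    then have gT': "(g, k) \<in> T'" and g0: "\<Gamma>0' g = 0" unfolding restrict_ker_def by auto
    have "\<forall>x\<in>\<Gamma>0 ` Domain T. cinner x (\<Gamma>1' g) = 0"
    proof
      fix x assume "x \<in> \<Gamma>0 ` Domain T"
      then obtain f Tf where f: "(f, Tf) \<in> T" "x = \<Gamma>0 f" by auto
      have "cinner k f = cinner g Tf" using T_sub f(1) gk unfolding op_adjoint_def by auto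
      then have "cinner Tf g = cinner f k" by (metis cinner_conj)
      then show "cinner x (\<Gamma>1' g) = 0" using G[OF f(1) gT'] g0 f(2) by simp
    qed
    then have "\<Gamma>1' g = 0" using dense_orth[OF D] by blast
    then show "g \<in> {g \<in> Domain T'. \<Gamma>0' g = 0 \<and> \<Gamma>1' g = 0}" using gT' g0 by auto
  qed
  show "{g \<in> Domain T'. \<Gamma>0' g = 0 \<and> \<Gamma>1' g = 0} \<subseteq> Domain S"
  proof
    fix g assume "g \<in> {g \<in> Domain T'. \<Gamma>0' g = 0 \<and> \<Gamma>1' g = 0}"
    then obtain k where gk: "(g, k) \<in> T'" and g0: "\<Gamma>0' g = 0" "\<Gamma>1' g = 0" by auto
    have "(g, k) \<in> op_adjoint T"
      unfolding op_adjoint_def using G[OF _ gk] g0 by auto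
    then have "(g, k) \<in> op_adjoint (op_adjoint S)"
      using adj_closure[of T] T_core by simp
    then have "(g, k) \<in> S" using adj_adj_closed[OF S_op S_cl] by auto
    then show "g \<in> Domain S" by auto
  qed
qed

theorem lemma2p4:
  fixes S S' T T' :: "('h::complex_hilbert \<times> 'h) set"
    and \<Gamma>0 \<Gamma>1 \<Gamma>0' \<Gamma>1' :: "'h \<Rightarrow> 'g::complex_hilbert"
  assumes separable: "\<exists>D::'h set. countable D \<and> closure D = UNIV"
    and pair: "adjoint_pair S S'"
    and T_op: "is_operator T" and T'_op: "is_operator T'"
    and T_sub: "T \<subseteq> op_adjoint S" and T'_sub: "T' \<subseteq> op_adjoint S'"
    and T_core: "closure T = op_adjoint S" and T'_core: "closure T' = op_adjoint S'"
    and lin: "linear_on_dom T \<Gamma>0" "linear_on_dom T \<Gamma>1"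
             "linear_on_dom T' \<Gamma>0'" "linear_on_dom T' \<Gamma>1'"
    and G: "\<And>f Tf g T'g. (f, Tf) \<in> T \<Longrightarrow> (g, T'g) \<in> T' \<Longrightarrow>
              cinner Tf g - cinner f T'g = cinner (\<Gamma>1 f) (\<Gamma>0' g) - cinner (\<Gamma>0 f) (\<Gamma>1' g)"
    and D: "closure (\<Gamma>0 ` Domain T) = UNIV" "closure (\<Gamma>0' ` Domain T') = UNIV"
    and M: "op_adjoint (restrict_ker T \<Gamma>0) = restrict_ker T' \<Gamma>0'"
           "op_adjoint (restrict_ker T' \<Gamma>0') = restrict_ker T \<Gamma>0"
  shows "Domain S = {g \<in> Domain T'. \<Gamma>0' g = 0 \<and> \<Gamma>1' g = 0}
       \<and> Domain S' = {f \<in> Domain T. \<Gamma>0 f = 0 \<and> \<Gamma>1 f = 0}"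
proof
  have S: "is_operator S" "closed S" "is_operator S'" "closed S'"
    using pair unfolding adjoint_pair_def closed_operator_def by auto
  show "Domain S = {g \<in> Domain T'. \<Gamma>0' g = 0 \<and> \<Gamma>1' g = 0}"
    by (rule half[OF S(1,2) T_sub T_core G D(1) M(1)])
  have G': "cinner T'g f - cinner g Tf = cinner (\<Gamma>1' g) (\<Gamma>0 f) - cinner (\<Gamma>0' g) (\<Gamma>1 f)"
    if "(g, T'g) \<in> T'" "(f, Tf) \<in> T" for f Tf g T'g
  proof -
    have "cnj (cinner Tf g - cinner f T'g) = cnj (cinner (\<Gamma>1 f) (\<Gamma>0' g) - cinner (\<Gamma>0 f) (\<Gamma>1' g))"
      using G[OF that(2,1)] by simp
    then have "cinner g Tf - cinner T'g f = cinner (\<Gamma>0' g) (\<Gamma>1 f) - cinner (\<Gamma>1' g) (\<Gamma>0 f)"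
      by (simp only: complex_cnj_diff cinner_conj[of Tf g] cinner_conj[of f T'g]
          cinner_conj[of "\<Gamma>1 f"] cinner_conj[of "\<Gamma>0 f"] complex_cnj_cnj)
    then show ?thesis by (simp add: algebra_simps)
  qed
  show "Domain S' = {f \<in> Domain T. \<Gamma>0 f = 0 \<and> \<Gamma>1 f = 0}"
    by (rule half[OF S(3,4) T'_sub T'_core G' D(2) M(2)])
qed

end
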